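(* Let $G$ be a graph that has a set of twins $T=\{u_1,\dots,u_r\}$ with $r\ge 3$, and let $G_i=G-u_i$. If $S_i$ is a zero forcing set of $G_i$, then $S_i\cup\{u_i\}$ is a zero forcing set of $G$. If $S$ is a zero forcing set of $G$ with $u_i\in S$, then $S\setminus\{u_i\}$ is a zero forcing set of $G_i$. Consequently $S_i\mapsto S_i\cup\{u_i\}$ is a bijection between the zero forcing sets of $G_i$ and the zero forcing sets of $G$ containing $u_i$, and a zero forcing set $S_i$ of $G_i$ is minimal if and only if $S_i\cup\{u_i\}$ is a minimal zero forcing set of $G$.
   Context: Vertices $u,w$ of $G$ are twins if $N_G(u)=N_G(w)$ (open neighborhoods); a set of twins is a set of vertices any two of which are twins. $G-u$ is the graph obtained by deleting $u$. Zero forcing: starting with a set $S$ of blue vertices, a blue vertex $v$ may turn blue a white vertex $w$ if $w$ is the only white neighbor of $v$; $S$ is a zero forcing set if repeated application colors all vertices blue. Minimal means minimal under inclusion. *)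

theory Defs
  imports Main
begin

definition simple_graph :: "'a set \<Rightarrow> ('a \<Rightarrow> 'a \<Rightarrow> bool) \<Rightarrow> bool" where
  "simple_graph V E \<longleftrightarrow> finite V \<and> (\<forall>x y. E x y \<longrightarrow> E y x)
     \<and> (\<forall>x. \<not> E x x) \<and> (\<forall>x y. E x y \<longrightarrow> x \<in> V \<and> y \<in> V)"

definition nbhd :: "'a set \<Rightarrow> ('a \<Rightarrow> 'a \<Rightarrow> bool) \<Rightarrow> 'a \<Rightarrow> 'a set" where
  "nbhd V E v = {w \<in> V. E v w}"

definition twin_set :: "'a set \<Rightarrow> ('a \<Rightarrow> 'a \<Rightarrow> bool) \<Rightarrow> 'a set \<Rightarrow> bool" where
  "twin_set V E T \<longleftrightarrow> T \<subseteq> V \<and> (\<forall>u\<in>T. \<forall>w\<in>T. nbhd V E u = nbhd V E w)"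

definition del_vertex_edges :: "('a \<Rightarrow> 'a \<Rightarrow> bool) \<Rightarrow> 'a \<Rightarrow> 'a \<Rightarrow> 'a \<Rightarrow> bool" where
  "del_vertex_edges E u x y \<longleftrightarrow> E x y \<and> x \<noteq> u \<and> y \<noteq> u"

text \<open>Final blue set of the zero forcing process started from S: least set containing
  S \<inter> V and closed under the color change rule (a blue vertex v with all neighbors
  except w blue forces its neighbor w).\<close>
inductive_set zf_closure :: "'a set \<Rightarrow> ('a \<Rightarrow> 'a \<Rightarrow> bool) \<Rightarrow> 'a set \<Rightarrow> 'a set"
  for V E S where
  init: "s \<in> S \<Longrightarrow> s \<in> V \<Longrightarrow> s \<in> zf_closure V E S"
| force: "v \<in> zf_closure V E S \<Longrightarrow> w \<in> nbhd V E v \<Longrightarrow>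
          (\<forall>x \<in> nbhd V E v. x \<noteq> w \<longrightarrow> x \<in> zf_closure V E S) \<Longrightarrow>
          w \<in> zf_closure V E S"

definition zero_forcing_set :: "'a set \<Rightarrow> ('a \<Rightarrow> 'a \<Rightarrow> bool) \<Rightarrow> 'a set \<Rightarrow> bool" where
  "zero_forcing_set V E S \<longleftrightarrow> S \<subseteq> V \<and> zf_closure V E S = V"

definition minimal_zero_forcing_set :: "'a set \<Rightarrow> ('a \<Rightarrow> 'a \<Rightarrow> bool) \<Rightarrow> 'a set \<Rightarrow> bool" where
  "minimal_zero_forcing_set V E S \<longleftrightarrow> zero_forcing_set V E S
     \<and> (\<forall>S'. S' \<subset> S \<longrightarrow> \<not> zero_forcing_set V E S')"

end

theory Submission
  imports Defs
begin

lemma zf_sub: "zf_closure V E S \<subseteq> V"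
proof
  fix x assume "x \<in> zf_closure V E S" then show "x \<in> V"
  proof (induct rule: zf_closure.induct)
    case (init s) then show ?case by blast
  next
    case (force v w) then show ?case unfolding nbhd_def by blast
  qed
qed

lemma twin_adj:
  assumes g: "simple_graph V E" and t: "nbhd V E t = nbhd V E u"
  shows "E x t \<longleftrightarrow> E x u"
proof -
  have "E x t \<Longrightarrow> E x u"
  proof -
    assume "E x t" then have "E t x" "x \<in> V" using g unfolding simple_graph_def by auto
    then have "x \<in> nbhd V E u" using t unfolding nbhd_def by blast
    then show "E x u" using g unfolding simple_graph_def nbhd_def by auto
  qed
  moreover have "E x u \<Longrightarrow> E x t"
  proof -
    assume "E x u" then have "E u x" "x \<in> V" using g unfolding simple_graph_def by auto
    then have "x \<in> nbhd V E t" using t unfolding nbhd_def by blast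
    then show "E x t" using g unfolding simple_graph_def nbhd_def by auto
  qed
  ultimately show ?thesis by blast
qed

lemma twin_nonadj:
  assumes g: "simple_graph V E" and t: "nbhd V E t = nbhd V E u"
  shows "\<not> E t u"
proof
  assume "E t u" then have "E u t" "t \<in> V" using g unfolding simple_graph_def by auto
  then have "t \<in> nbhd V E t" using t unfolding nbhd_def by blast
  then show False using g unfolding simple_graph_def nbhd_def by auto
qed

lemma twin_in_S:
  assumes g: "simple_graph V E" and ab: "a \<noteq> b" "a \<in> V"
    and t: "nbhd V E a = nbhd V E b" and c: "zf_closure V E S = V"
  shows "a \<in> S \<or> b \<in> S"
proof -
  have "x \<in> zf_closure V E S \<Longrightarrow> x \<in> {a,b} \<longrightarrow> a \<in> S \<or> b \<in> S" for x
  proof (induct rule: zf_closure.induct)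
    case (init s) then show ?case by auto
  next
    case (force v w)
    have "b \<in> nbhd V E v" if "w = a"
    proof -
      have "E v a" using force(3) that unfolding nbhd_def by auto
      then have "E v b" using twin_adj[OF g t] by blast
      then show ?thesis using g unfolding simple_graph_def nbhd_def by auto
    qed
    moreover have "a \<in> nbhd V E v" if "w = b"
    proof -
      have "E v b" using force(3) that unfolding nbhd_def by auto
      then have "E v a" using twin_adj[OF g t] by blast
      then show ?thesis using g unfolding simple_graph_def nbhd_def by auto
    qed
    ultimately show ?case using force(4) ab by auto
  qed
  then show ?thesis using ab c by blast
qed

lemma part1:
  assumes S: "S \<subseteq> V - {u}" and u: "u \<in> V"
    and c: "zf_closure (V - {u}) (del_vertex_edges E u) S = V - {u}"
  shows "zf_closure V E (insert u S) = V"
proof -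
  have "x \<in> zf_closure (V - {u}) (del_vertex_edges E u) S \<Longrightarrow> x \<in> zf_closure V E (insert u S)" for x
  proof (induct rule: zf_closure.induct)
    case (init s) then show ?case by (auto intro: zf_closure.init)
  next
    case (force v w)
    show ?case
    proof (rule zf_closure.force[OF force(2)])
      show "w \<in> nbhd V E v" using force(3) by (auto simp: nbhd_def del_vertex_edges_def)
      have "v \<noteq> u" using force(3) by (auto simp: nbhd_def del_vertex_edges_def)
      then show "\<forall>x\<in>nbhd V E v. x \<noteq> w \<longrightarrow> x \<in> zf_closure V E (insert u S)"
        using force(4) u by (auto simp: nbhd_def del_vertex_edges_def intro: zf_closure.init)
    qed
  qed
  moreover have "u \<in> zf_closure V E (insert u S)" using u by (auto intro: zf_closure.init)
  ultimately have "V \<subseteq> zf_closure V E (insert u S)" using c by blast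
  then show ?thesis using zf_sub[of V E "insert u S"] by blast
qed

lemma part2:
  assumes g: "simple_graph V E" and tw: "nbhd V E t = nbhd V E u" and tu: "t \<noteq> u"
    and S: "t \<in> S" "S \<subseteq> V" and c: "zf_closure V E S = V"
  shows "zf_closure (V - {u}) (del_vertex_edges E u) (S - {u}) = V - {u}"
proof -
  let ?C = "zf_closure (V - {u}) (del_vertex_edges E u) (S - {u})"
  have tC: "t \<in> ?C" using S tu by (auto intro: zf_closure.init)
  have ntu: "\<not> E t u" "\<not> E u u" using twin_nonadj[OF g tw] g unfolding simple_graph_def by auto
  have "x \<in> zf_closure V E S \<Longrightarrow> x = u \<or> x \<in> ?C" for x
  proof (induct rule: zf_closure.induct)
    case (init s) then show ?case by (auto intro: zf_closure.init)
  next
    case (force v w)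
    show ?case
    proof (cases "w = u")
      case True then show ?thesis by simp
    next
      case wu: False
      show ?thesis
      proof (cases "v = u")
        case True
        have "E t w" using force(3) True tw unfolding nbhd_def by auto
        have "w \<in> ?C"
        proof (rule zf_closure.force[OF tC])
          show "w \<in> nbhd (V - {u}) (del_vertex_edges E u) t"
            using force(3) True tw wu tu unfolding nbhd_def del_vertex_edges_def by auto
          show "\<forall>x\<in>nbhd (V - {u}) (del_vertex_edges E u) t. x \<noteq> w \<longrightarrow> x \<in> ?C"
            using force(4) True tw unfolding nbhd_def del_vertex_edges_def by auto
        qed
        then show ?thesis by simp
      next
        case False
        then have vC: "v \<in> ?C" using force(2) by auto
        have "w \<in> ?C"
        proof (rule zf_closure.force[OF vC])
          show "w \<in> nbhd (V - {u}) (del_vertex_edges E u) v"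
            using force(3) False wu unfolding nbhd_def del_vertex_edges_def by auto
          show "\<forall>x\<in>nbhd (V - {u}) (del_vertex_edges E u) v. x \<noteq> w \<longrightarrow> x \<in> ?C"
            using force(4) unfolding nbhd_def del_vertex_edges_def by auto
        qed
        then show ?thesis by simp
      qed
    qed
  qed
  then have "V - {u} \<subseteq> zf_closure (V - {u}) (del_vertex_edges E u) (S - {u})" using c by blast
  then show ?thesis using zf_sub[of "V - {u}" "del_vertex_edges E u" "S - {u}"] by blast
qed

lemma partK:
  assumes g: "simple_graph V E" and tw1: "nbhd V E w1 = nbhd V E u" and tw2: "nbhd V E w2 = nbhd V E u"
    and d: "w1 \<noteq> u" "w2 \<noteq> u" "w1 \<noteq> w2"
    and S: "w1 \<in> S" "w2 \<in> S" "u \<notin> S" "S \<subseteq> V" and c: "zf_closure V E S = V" and uV: "u \<in> V"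
  shows "zf_closure (V - {u}) (del_vertex_edges E u) (S - {w1}) = V - {u}"
proof -
  let ?C = "zf_closure (V - {u}) (del_vertex_edges E u) (S - {w1})"
  let ?P = "\<lambda>x. (x \<noteq> u \<and> x \<noteq> w1 \<longrightarrow> x \<in> ?C) \<and> (x = u \<longrightarrow> w1 \<in> ?C)"
  have w2C: "w2 \<in> ?C" using S d by (auto intro: zf_closure.init)
  have n1: "\<not> E w1 u" "\<not> E w2 u" "\<not> E u w1" "\<not> E u w2" "\<not> E u u" "\<not> E w1 w1"
    using twin_nonadj[OF g tw1] twin_nonadj[OF g tw2] g unfolding simple_graph_def by blast+
  have a1: "E x w1 \<longleftrightarrow> E x u" "E x w2 \<longleftrightarrow> E x u" for x
    using twin_adj[OF g tw1] twin_adj[OF g tw2] by blast+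
  have sym: "E x y \<Longrightarrow> E y x" for x y using g unfolding simple_graph_def by blast
  have "x \<in> zf_closure V E S \<Longrightarrow> ?P x" for x
  proof (induct rule: zf_closure.induct)
    case (init s) then show ?case using S by (auto intro: zf_closure.init)
  next
    case (force v w)
    have Evw: "E v w" "w \<in> V" using force(3) unfolding nbhd_def by auto
    show ?case
    proof (cases "w = w1")
      case True then show ?thesis using d by simp
    next
      case ww1: False
      show ?thesis
      proof (cases "w = u")
        case True
        have vnot: "v \<noteq> u" "v \<noteq> w1" using Evw True n1 by auto
        then have vC: "v \<in> ?C" using force(2) by auto
        have "w1 \<in> ?C"
        proof (rule zf_closure.force[OF vC])
          show "w1 \<in> nbhd (V - {u}) (del_vertex_edges E u) v"
            using Evw True vnot d a1 g unfolding nbhd_def del_vertex_edges_def simple_graph_def by auto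
          show "\<forall>x\<in>nbhd (V - {u}) (del_vertex_edges E u) v. x \<noteq> w1 \<longrightarrow> x \<in> ?C"
            using force(4) True unfolding nbhd_def del_vertex_edges_def by auto
        qed
        then show ?thesis using True by simp
      next
        case wu: False
        show ?thesis
        proof (cases "v = u \<or> v = w1")
          case True
          have Ewu: "E w u" using Evw True a1 sym by blast
          have "w \<in> ?C"
          proof (rule zf_closure.force[OF w2C])
            show "w \<in> nbhd (V - {u}) (del_vertex_edges E u) w2"
              using Evw Ewu wu d a1 sym unfolding nbhd_def del_vertex_edges_def by blast
            have "y \<in> ?C" if y: "y \<in> nbhd (V - {u}) (del_vertex_edges E u) w2" "y \<noteq> w" for y
            proof -
              have Ey: "E w2 y" "y \<in> V" "y \<noteq> u" using y unfolding nbhd_def del_vertex_edges_def by auto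
              have "E v y" using Ey True a1 sym by blast
              then have "y \<in> nbhd V E v" using Ey unfolding nbhd_def by auto
              then have "?P y" using force(4) y(2) by auto
              moreover have "y \<noteq> w1" using Ey n1 a1 sym by blast
              ultimately show ?thesis using Ey by auto
            qed
            then show "\<forall>x\<in>nbhd (V - {u}) (del_vertex_edges E u) w2. x \<noteq> w \<longrightarrow> x \<in> ?C" by blast
          qed
          then show ?thesis using wu by simp
        next
          case False
          then have vC: "v \<in> ?C" using force(2) by auto
          have "w \<in> ?C"
          proof (rule zf_closure.force[OF vC])
            show "w \<in> nbhd (V - {u}) (del_vertex_edges E u) v"
              using Evw False wu unfolding nbhd_def del_vertex_edges_def by auto
            have "y \<in> ?C" if y: "y \<in> nbhd (V - {u}) (del_vertex_edges E u) v" "y \<noteq> w" for y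
            proof -
              have Ey: "E v y" "y \<in> V" "y \<noteq> u" using y unfolding nbhd_def del_vertex_edges_def by auto
              have Py: "?P y" using force(4) y(2) Ey unfolding nbhd_def by auto
              show ?thesis
              proof (cases "y = w1")
                case True
                then have "E v u" using Ey a1 by blast
                then have "u \<in> nbhd V E v" using g unfolding nbhd_def simple_graph_def by auto
                then have "?P u" using force(4) wu by auto
                then show ?thesis using True by simp
              next
                case False then show ?thesis using Py Ey by auto
              qed
            qed
            then show "\<forall>x\<in>nbhd (V - {u}) (del_vertex_edges E u) v. x \<noteq> w \<longrightarrow> x \<in> ?C" by blast
          qed
          then show ?thesis using wu by simp
        qed
      qed
    qed
  qed
  note Pall = this
  have "x \<in> ?C" if x: "x \<in> V - {u}" for x
  proof (cases "x = w1")
    case True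
    have "?P u" using Pall[of u] c uV by auto
    then show ?thesis using True by simp
  next
    case False
    have "?P x" using Pall[of x] c x by auto
    then show ?thesis using False x by simp
  qed
  then have "V - {u} \<subseteq> ?C" by blast
  then show ?thesis using zf_sub[of "V - {u}" "del_vertex_edges E u" "S - {w1}"] by blast
qed

theorem proposition3p6:
  fixes V :: "'a set" and E :: "'a \<Rightarrow> 'a \<Rightarrow> bool" and T :: "'a set" and u :: 'a
  assumes "simple_graph V E"
    and "twin_set V E T" and "card T \<ge> 3"
    and "u \<in> T"
  shows "(\<forall>S. zero_forcing_set (V - {u}) (del_vertex_edges E u) S
              \<longrightarrow> zero_forcing_set V E (insert u S))
       \<and> (\<forall>S. zero_forcing_set V E S \<and> u \<in> S
              \<longrightarrow> zero_forcing_set (V - {u}) (del_vertex_edges E u) (S - {u}))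
       \<and> bij_betw (\<lambda>S. insert u S)
            {S. zero_forcing_set (V - {u}) (del_vertex_edges E u) S}
            {S. zero_forcing_set V E S \<and> u \<in> S}
       \<and> (\<forall>S. zero_forcing_set (V - {u}) (del_vertex_edges E u) S
              \<longrightarrow> (minimal_zero_forcing_set (V - {u}) (del_vertex_edges E u) S
                   \<longleftrightarrow> minimal_zero_forcing_set V E (insert u S)))"
proof -
  note g = assms(1)
  have TV: "T \<subseteq> V" and tw: "\<And>a b. a \<in> T \<Longrightarrow> b \<in> T \<Longrightarrow> nbhd V E a = nbhd V E b"
    using assms(2) unfolding twin_set_def by blast+
  have fT: "finite T" using TV g finite_subset unfolding simple_graph_def by blast
  have uV: "u \<in> V" using TV assms(4) by auto
  have c2: "card (T - {u}) \<ge> 2" using assms(3,4) fT by simp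
  then have "T - {u} \<noteq> {}" by (metis card.empty not_numeral_le_zero)
  then obtain w1 where w1: "w1 \<in> T - {u}" by blast
  have "card (T - {u} - {w1}) \<ge> 1" using c2 w1 fT by simp
  then have "T - {u} - {w1} \<noteq> {}" by (metis card.empty not_one_le_zero)
  then obtain w2 where w2: "w2 \<in> T - {u} - {w1}" by blast
  have tw1: "nbhd V E w1 = nbhd V E u" and tw2: "nbhd V E w2 = nbhd V E u"
    using tw[of w1 u] tw[of w2 u] w1 w2 assms(4) by blast+
  have w1V: "w1 \<in> V" and w2V: "w2 \<in> V" using w1 w2 TV by auto
  have d: "w1 \<noteq> u" "w2 \<noteq> u" "w1 \<noteq> w2" using w1 w2 by auto
  have P1: "zero_forcing_set V E (insert u S)"
    if "zero_forcing_set (V - {u}) (del_vertex_edges E u) S" for S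
    using that part1[of S V u E] uV unfolding zero_forcing_set_def by auto
  have P2: "zero_forcing_set (V - {u}) (del_vertex_edges E u) (S - {u})"
    if "zero_forcing_set V E S" "u \<in> S" for S
  proof -
    have c: "zf_closure V E S = V" "S \<subseteq> V" using that unfolding zero_forcing_set_def by auto
    have "u \<in> S \<and> w1 \<in> S \<or> w1 \<in> S \<or> w2 \<in> S"
      using twin_in_S[OF g d(3) w1V, of S] tw1 tw2 c by auto
    then obtain t where t: "t \<in> S" "t \<noteq> u" "nbhd V E t = nbhd V E u"
      using tw1 tw2 d by blast
    show ?thesis using part2[OF g t(3) t(2) t(1) c(2) c(1)] c unfolding zero_forcing_set_def by auto
  qed
  have uS: "u \<notin> S" if "zero_forcing_set (V - {u}) (del_vertex_edges E u) S" for S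
    using that unfolding zero_forcing_set_def by auto
  have B: "bij_betw (\<lambda>S. insert u S)
            {S. zero_forcing_set (V - {u}) (del_vertex_edges E u) S}
            {S. zero_forcing_set V E S \<and> u \<in> S}"
  proof (rule bij_betw_imageI)
    show "inj_on (insert u) {S. zero_forcing_set (V - {u}) (del_vertex_edges E u) S}"
      using uS by (smt (verit, best) inj_onI insert_ident mem_Collect_eq)
    show "insert u ` {S. zero_forcing_set (V - {u}) (del_vertex_edges E u) S} =
      {S. zero_forcing_set V E S \<and> u \<in> S}"
    proof
      show "insert u ` {S. zero_forcing_set (V - {u}) (del_vertex_edges E u) S}
        \<subseteq> {S. zero_forcing_set V E S \<and> u \<in> S}" using P1 by auto
      show "{S. zero_forcing_set V E S \<and> u \<in> S}
        \<subseteq> insert u ` {S. zero_forcing_set (V - {u}) (del_vertex_edges E u) S}"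
      proof
        fix S assume "S \<in> {S. zero_forcing_set V E S \<and> u \<in> S}"
        then have "S = insert u (S - {u})" "S - {u} \<in> {S. zero_forcing_set (V - {u}) (del_vertex_edges E u) S}"
          using P2 by auto
        then show "S \<in> insert u ` {S. zero_forcing_set (V - {u}) (del_vertex_edges E u) S}" by blast
      qed
    qed
  qed
  have M: "minimal_zero_forcing_set (V - {u}) (del_vertex_edges E u) S
                   \<longleftrightarrow> minimal_zero_forcing_set V E (insert u S)"
    if zS: "zero_forcing_set (V - {u}) (del_vertex_edges E u) S" for S
  proof
    assume m: "minimal_zero_forcing_set (V - {u}) (del_vertex_edges E u) S"
    have "\<not> zero_forcing_set V E S'" if S': "S' \<subset> insert u S" for S'
    proof
      assume z: "zero_forcing_set V E S'"
      show False
      proof (cases "u \<in> S'")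
        case True
        have "S' - {u} \<subset> S" using S' True uS[OF zS] by auto
        then show False using P2[OF z True] m unfolding minimal_zero_forcing_set_def by blast
      next
        case False
        have c: "zf_closure V E S' = V" "S' \<subseteq> V" using z unfolding zero_forcing_set_def by auto
        have "w1 \<in> S'" using twin_in_S[OF g _ uV, of w1 S'] d tw1 c False by auto
        moreover have "w2 \<in> S'" using twin_in_S[OF g _ uV, of w2 S'] d tw2 c False by auto
        ultimately have "zero_forcing_set (V - {u}) (del_vertex_edges E u) (S' - {w1})"
          using partK[OF g tw1 tw2 d _ _ False c(2) c(1) uV] c False
          unfolding zero_forcing_set_def by auto
        moreover have "S' - {w1} \<subset> S" using S' False \<open>w1 \<in> S'\<close> by auto
        ultimately show False using m unfolding minimal_zero_forcing_set_def by blast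
      qed
    qed
    then show "minimal_zero_forcing_set V E (insert u S)"
      using P1[OF zS] unfolding minimal_zero_forcing_set_def by blast
  next
    assume m: "minimal_zero_forcing_set V E (insert u S)"
    have "\<not> zero_forcing_set (V - {u}) (del_vertex_edges E u) S'" if S': "S' \<subset> S" for S'
    proof
      assume z: "zero_forcing_set (V - {u}) (del_vertex_edges E u) S'"
      have "insert u S' \<subset> insert u S" using S' uS[OF zS] uS[OF z] by auto
      then show False using P1[OF z] m unfolding minimal_zero_forcing_set_def by blast
    qed
    then show "minimal_zero_forcing_set (V - {u}) (del_vertex_edges E u) S"
      using zS unfolding minimal_zero_forcing_set_def by blast
  qed
  show ?thesis using P1 P2 B M by blast
qed

end
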